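(* Let $m\ge2$, $G=CK(2m-1)$, and let $B$ be a blocker for the simple Hamiltonian paths of $G$ whose $m$ edges are parallel (or equal) to the boundary edges $[0,1],\dots,[m-1,m]$, one per direction. Let $[\alpha,\alpha+1]$ and $[m-\delta-1,m-\delta]$ be the first and last edges of $\langle0,1,\dots,m\rangle$ belonging to $B$, and suppose that $B$ misses exactly one edge $[\alpha+\beta,\alpha+\beta+1]$ of the boundary path $\langle\alpha,\dots,m-\delta\rangle$. Put $\gamma=m-\delta-\alpha-\beta-1$. Then there exists an integer $\nu$ with $1\le\nu<\min(\beta,\gamma)$ such that $[\alpha+\beta-\nu,\,\alpha+\beta+1+\nu]\in B$.
   Context: $CK(2m-1)$ is the complete convex geometric graph on $2m-1$ points in convex position, labelled clockwise $0,\dots,2m-2$ (elements of $\mathbb{Z}_{2m-1}$), with all segments as edges; boundary edges are $[i,i+1]$. The direction of $[i,j]$ is $i+j\pmod{2m-1}$; edges are parallel if they have the same direction. A simple Hamiltonian path (SHP) is a path through all vertices whose edges pairwise do not cross; a blocker for SHPs is an edge set of smallest possible size sharing an edge with every SHP. *)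

theory Defs
  imports Main
begin

text \<open>Complete convex geometric graph CK(n) on points 0..n-1 in convex position
(clockwise labelling). Edges are 2-element subsets of {0..<n}.\<close>

definition cvx_edges :: "nat \<Rightarrow> nat set set" where
  "cvx_edges n = {{i, j} | i j. i < n \<and> j < n \<and> i \<noteq> j}"

text \<open>Two segments between points in convex position cross iff their endpoints
strictly interleave in the cyclic (equivalently linear) order of labels.\<close>

definition crosses :: "nat set \<Rightarrow> nat set \<Rightarrow> bool" where
  "crosses e f \<longleftrightarrow> (\<exists>a b c d. a < c \<and> c < b \<and> b < d \<and>
      ((e = {a, b} \<and> f = {c, d}) \<or> (e = {c, d} \<and> f = {a, b})))"

definition is_SHP :: "nat \<Rightarrow> nat set set \<Rightarrow> bool" where
  "is_SHP n P \<longleftrightarrow> (\<exists>ps. distinct ps \<and> set ps = {0..<n} \<and>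
      P = {{ps ! k, ps ! (k + 1)} | k. k + 1 < length ps} \<and>
      (\<forall>e\<in>P. \<forall>f\<in>P. \<not> crosses e f))"

definition blocks_SHP :: "nat \<Rightarrow> nat set set \<Rightarrow> bool" where
  "blocks_SHP n B \<longleftrightarrow> (\<forall>P. is_SHP n P \<longrightarrow> B \<inter> P \<noteq> {})"

definition is_SHP_blocker :: "nat \<Rightarrow> nat set set \<Rightarrow> bool" where
  "is_SHP_blocker n B \<longleftrightarrow> B \<subseteq> cvx_edges n \<and> blocks_SHP n B \<and>
      (\<forall>B'. B' \<subseteq> cvx_edges n \<and> blocks_SHP n B' \<longrightarrow> card B \<le> card B')"

definition edge_dir :: "nat \<Rightarrow> nat set \<Rightarrow> nat" where
  "edge_dir n e = (\<Sum>e) mod n"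

end

theory Submission
  imports Defs
begin

lemma crosses_sym: "crosses e f \<Longrightarrow> crosses f e"
  unfolding crosses_def by blast

lemma crosses_between: "crosses e f \<Longrightarrow> \<exists>x\<in>f. \<exists>p q. e = {p,q} \<and> p < x \<and> x < q"
  unfolding crosses_def by blast

lemma crosses_rot1:
  assumes "crosses e f" "e \<subseteq> {..<n}" "f \<subseteq> {..<n}"
  shows "crosses ((\<lambda>x. (x+1) mod n) ` e) ((\<lambda>x. (x+1) mod n) ` f)"
proof -
  from assms(1) obtain a b c d where o: "a<c" "c<b" "b<d"
    and ef: "(e={a,b} \<and> f={c,d}) \<or> (e={c,d} \<and> f={a,b})" unfolding crosses_def by blast
  have dn: "d < n" using ef assms(2,3) by auto
  show ?thesis
  proof (cases "d+1 < n")
    case True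
    then have m: "(a+1) mod n = a+1" "(b+1) mod n = b+1" "(c+1) mod n = c+1" "(d+1) mod n = d+1"
      using o by auto
    show ?thesis unfolding crosses_def
      apply (rule exI[of _ "a+1"], rule exI[of _ "b+1"], rule exI[of _ "c+1"], rule exI[of _ "d+1"])
      using ef o m by auto
  next
    case False
    then have "d + 1 = n" using dn by simp
    then have m: "(a+1) mod n = a+1" "(b+1) mod n = b+1" "(c+1) mod n = c+1" "(d+1) mod n = 0"
      using o dn by auto
    show ?thesis unfolding crosses_def
      apply (rule exI[of _ "0"], rule exI[of _ "c+1"], rule exI[of _ "a+1"], rule exI[of _ "b+1"])
      using ef o m by auto
  qed
qed

lemma crosses_rot:
  assumes "crosses e f" "e \<subseteq> {..<n}" "f \<subseteq> {..<n}" "n > 0"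
  shows "crosses ((\<lambda>x. (x+t) mod n) ` e) ((\<lambda>x. (x+t) mod n) ` f)"
proof (induction t)
  case 0
  have "(\<lambda>x. (x+0) mod n) ` e = e" using assms(2) by (force simp: image_iff)
  moreover have "(\<lambda>x. (x+0) mod n) ` f = f" using assms(3) by (force simp: image_iff)
  ultimately show ?case using assms(1) by simp
next
  case (Suc t)
  have eq: "(\<lambda>x. (x + Suc t) mod n) ` A = (\<lambda>x. (x+1) mod n) ` ((\<lambda>x. (x+t) mod n) ` A)" for A
    by (auto simp: image_iff mod_Suc_eq)
  show ?case unfolding eq
    by (rule crosses_rot1[OF Suc.IH]) (use assms(4) in auto)
qed

locale growth =
  fixes g lo hi :: "nat \<Rightarrow> int"
  assumes g0: "lo 0 = g 0" "hi 0 = g 0"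
   and grow: "\<And>i. 0 < i \<Longrightarrow> (g i = hi (i-1) + 1 \<and> hi i = g i \<and> lo i = lo (i-1)) \<or>
                    (g i = lo (i-1) - 1 \<and> lo i = g i \<and> hi i = hi (i-1))"
begin

lemma basic: "lo i \<le> g i \<and> g i \<le> hi i \<and> hi i - lo i = int i"
proof (induction i)
  case 0 then show ?case using g0 by simp
next
  case (Suc i) then show ?case using grow[of "Suc i"] by auto
qed

lemma mono: "i \<le> j \<Longrightarrow> lo j \<le> lo i \<and> hi i \<le> hi j"
proof (induction j rule: dec_induct)
  case base then show ?case by simp
next
  case (step j) then show ?case using grow[of "Suc j"] basic[of j] by auto
qed

lemma inside: "i \<le> j \<Longrightarrow> lo j \<le> g i \<and> g i \<le> hi j"
  using mono[of i j] basic[of i] by auto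

lemma outside: "0 < l \<Longrightarrow> g l < lo (l-1) \<or> g l > hi (l-1)"
  using grow[of l] by auto

lemma inj: "i < l \<Longrightarrow> g i \<noteq> g l"
  using inside[of i "l-1"] outside[of l] by fastforce

lemma nc: "i + 1 < l \<Longrightarrow> \<not> (min (g i) (g (i+1)) < g l \<and> g l < max (g i) (g (i+1)))"
  using inside[of i "l-1"] inside[of "i+1" "l-1"] outside[of l] by fastforce

end


lemma mod_close_eq:
  fixes x y N :: int
  assumes "x mod N = y mod N" "\<bar>x - y\<bar> < N"
  shows "x = y"
proof -
  have "N dvd (x - y)" using assms(1) by (simp add: mod_eq_dvd_iff)
  then obtain q where q: "x - y = N * q" by blast
  have "q = 0"
  proof (rule ccontr)
    assume "q \<noteq> 0"
    then have "\<bar>N * q\<bar> \<ge> N" using assms(2) by (auto simp: abs_mult) (smt (verit) mult_le_cancel_left1 abs_ge_self)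
    then show False using q assms(2) by simp
  qed
  then show ?thesis using q by simp
qed


lemma (in growth) lab_inj:
  assumes "n > 0" "i < n" "j < n" "nat (g i mod int n) = nat (g j mod int n)"
  shows "i = j"
proof (rule ccontr)
  assume ne: "i \<noteq> j"
  have a: "lo (n-1) \<le> g i \<and> g i \<le> hi (n-1)" using inside[of i "n-1"] assms by auto
  have b: "lo (n-1) \<le> g j \<and> g j \<le> hi (n-1)" using inside[of j "n-1"] assms by auto
  have c: "hi (n-1) - lo (n-1) = int n - 1" using basic[of "n-1"] assms by auto
  have "g i mod int n = g j mod int n" using assms(4) assms(1)
    by (metis Euclidean_Rings.pos_mod_sign nat_eq_iff2 of_nat_0_less_iff)
  moreover have "\<bar>g i - g j\<bar> < int n" using a b c by auto
  ultimately have "g i = g j" by (rule mod_close_eq)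
  then show False using inj[of i j] inj[of j i] ne by (cases "i < j") auto
qed

lemma (in growth) h_nc:
  fixes L :: int and h :: "nat \<Rightarrow> nat"
  assumes L: "\<And>i. i < n \<Longrightarrow> L \<le> g i" and h: "\<And>i. h i = nat (g i - L)"
    and il: "i + 1 < l" "l < n"
  shows "\<not> (h i < h l \<and> h l < h (i+1)) \<and> \<not> (h (i+1) < h l \<and> h l < h i)"
proof -
  have "L \<le> g i" "L \<le> g (i+1)" "L \<le> g l" using L il by auto
  then show ?thesis using nc[OF il(1)] unfolding h by auto
qed

lemma (in growth) h_nocross:
  fixes L :: int and h :: "nat \<Rightarrow> nat"
  assumes L: "\<And>i. i < n \<Longrightarrow> L \<le> g i" and h: "\<And>i. h i = nat (g i - L)"
    and ij: "i + 1 < n" "j + 1 < n"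
  shows "\<not> crosses {h i, h (i+1)} {h j, h (j+1)}"
proof
  have key: False if c: "crosses {h i, h (i+1)} {h j, h (j+1)}" and lt: "i < j" and "j + 1 < n"
    for i j
  proof -
    obtain x p q where x: "x \<in> {h j, h (j+1)}" and pq: "{h i, h (i+1)} = {p,q}" "p < x" "x < q"
      using crosses_between[OF c] by blast
    obtain l where l: "x = h l" "l = j \<or> l = j + 1" using x by auto
    show False
    proof (cases "l = i + 1")
      case True then show False using pq l by auto
    next
      case False
      then have "i + 1 < l" "l < n" using l lt that(3) by auto
      from h_nc[OF L h this] show False using pq l by (auto simp: doubleton_eq_iff)
    qed
  qed
  assume c: "crosses {h i, h (i+1)} {h j, h (j+1)}"
  consider "i < j" | "i = j" | "j < i" by linarith
  then show False
  proof cases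
    case 1 then show ?thesis using key[OF c] ij by blast
  next
    case 2
    then show ?thesis using crosses_between[OF c] by (auto simp: doubleton_eq_iff)
  next
    case 3 then show ?thesis using key[OF crosses_sym[OF c]] ij by blast
  qed
qed

lemma (in growth) SHP:
  assumes n: "n > 0"
  shows "is_SHP n {{nat (g i mod int n), nat (g (i+1) mod int n)} | i. i+1 < n}"
proof -
  let ?lab = "\<lambda>i. nat (g i mod int n)"
  define ps where "ps = map ?lab [0..<n]"
  have len: "length ps = n" unfolding ps_def by simp
  have nth: "ps ! i = ?lab i" if "i < n" for i using that unfolding ps_def by simp
  have labn: "?lab i < n" for i using n
    by (metis Euclidean_Rings.pos_mod_bound Euclidean_Rings.pos_mod_sign nat_less_iff of_nat_0_less_iff)
  have dist: "distinct ps"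
    unfolding distinct_conv_nth len using nth lab_inj[OF n] by auto
  have sub: "set ps \<subseteq> {0..<n}" unfolding ps_def using labn by auto
  have setps: "set ps = {0..<n}"
    using card_subset_eq[OF _ sub] distinct_card[OF dist] len by simp
  have P: "{{ps ! k, ps ! (k + 1)} | k. k + 1 < length ps} =
           {{nat (g i mod int n), nat (g (i+1) mod int n)} | i. i+1 < n}"
    unfolding len using nth by (metis (no_types, opaque_lifting) add_lessD1)
  define L where "L = lo (n-1)"
  define s where "s = nat (L mod int n)"
  define h where "h i = nat (g i - L)" for i
  define t where "t = n - s"
  have L: "L \<le> g i" if "i < n" for i using inside[of i "n-1"] that unfolding L_def by auto
  have hn: "g i - L < int n" if "i < n" for i
  proof -
    have "i \<le> n - 1" using that by simp
    then show ?thesis using inside[of i "n-1"] basic[of "n-1"] that n unfolding L_def by auto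
  qed
  have sn: "s < n" unfolding s_def using n
    by (metis Euclidean_Rings.pos_mod_bound Euclidean_Rings.pos_mod_sign nat_less_iff of_nat_0_less_iff)
  have si: "int s = L mod int n" unfolding s_def using n by simp
  have rot: "(?lab i + t) mod n = h i" if "i < n" for i
  proof -
    have "int ((?lab i + t) mod n) = (g i mod int n + (int n - L mod int n)) mod int n"
    proof -
      have e1: "int ((?lab i + t) mod n) = (int (?lab i) + int t) mod int n" by (simp add: zmod_int)
      have e2: "int (?lab i) = g i mod int n" using n by simp
      have e3: "int t = int n - L mod int n" using sn si unfolding t_def by simp
      show ?thesis unfolding e1 e2 e3 ..
    qed
    also have "\<dots> = (g i mod int n - L mod int n + int n) mod int n" by (simp add: algebra_simps)
    also have "\<dots> = (g i mod int n - L mod int n) mod int n" by simp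
    also have "\<dots> = (g i - L) mod int n" by (simp add: mod_diff_eq)
    also have "\<dots> = g i - L" using L[OF that] hn[OF that] by simp
    finally show ?thesis unfolding h_def by simp
  qed
  have nocross: "\<not> crosses {?lab i, ?lab (i+1)} {?lab j, ?lab (j+1)}"
    if ij: "i + 1 < n" "j + 1 < n" for i j
  proof
    assume c: "crosses {?lab i, ?lab (i+1)} {?lab j, ?lab (j+1)}"
    have "crosses ((\<lambda>x. (x+t) mod n) ` {?lab i, ?lab (i+1)}) ((\<lambda>x. (x+t) mod n) ` {?lab j, ?lab (j+1)})"
      by (rule crosses_rot[OF c]) (use labn n in auto)
    then have "crosses {h i, h (i+1)} {h j, h (j+1)}" using rot ij by simp
    then show False using h_nocross[OF L h_def ij] by blast
  qed
  show ?thesis unfolding is_SHP_def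
    apply (rule exI[of _ ps])
    using dist setps P nocross by auto
qed


lemma growth_mirror:
  assumes "growth g lo hi"
  shows "growth (\<lambda>i. C - g i) (\<lambda>i. C - hi i) (\<lambda>i. C - lo i)"
  using assms unfolding growth_def by (metis (no_types, opaque_lifting) diff_diff_eq2 diff_add_cancel diff_diff_eq diff_diff_cancel add_diff_cancel_left')

definition gA :: "int \<Rightarrow> int \<Rightarrow> int \<Rightarrow> nat \<Rightarrow> int" where
  "gA k b c i = (if int i \<le> 2*b then (if even i then k - int i div 2 else k + (int i + 1) div 2)
    else if int i \<le> 2*c+2 then (if even i then k + int i div 2 else k - (int i + 1) div 2)
    else k + int i - c - 1)"
definition loA :: "int \<Rightarrow> int \<Rightarrow> int \<Rightarrow> nat \<Rightarrow> int" where
  "loA k b c i = (if int i \<le> 2*b then k - int i div 2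
    else if int i \<le> 2*c+2 then k - (int i + 1) div 2 else k - c - 1)"
definition hiA :: "int \<Rightarrow> int \<Rightarrow> int \<Rightarrow> nat \<Rightarrow> int" where
  "hiA k b c i = (if int i \<le> 2*b then k + (int i + 1) div 2
    else if int i \<le> 2*c+2 then k + int i div 2 else k + int i - c - 1)"

lemma growthA: assumes "0 \<le> b" "b \<le> c" shows "growth (gA k b c) (loA k b c) (hiA k b c)"
proof
  show "loA k b c 0 = gA k b c 0" "hiA k b c 0 = gA k b c 0" using assms by (auto simp: gA_def loA_def hiA_def)
  fix i :: nat assume "0 < i"
  then obtain j where j: "i = Suc j" by (cases i) auto
  show "(gA k b c i = hiA k b c (i - 1) + 1 \<and> hiA k b c i = gA k b c i \<and> loA k b c i = loA k b c (i - 1)) \<or>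
         (gA k b c i = loA k b c (i - 1) - 1 \<and> loA k b c i = gA k b c i \<and> hiA k b c i = hiA k b c (i - 1))"
  proof (cases "even j")
    case True
    then obtain t where t: "j = 2*t" by blast
    show ?thesis unfolding j t using assms by (auto simp: gA_def loA_def hiA_def)
  next
    case False
    then obtain t where t: "j = 2*t+1" using oddE by blast
    show ?thesis unfolding j t using assms by (auto simp: gA_def loA_def hiA_def; presburger)
  qed
qed


lemma mod_cases:
  fixes u N :: int assumes "0 < N"
  shows "0 \<le> u \<Longrightarrow> u < N \<Longrightarrow> u mod N = u"
    and "N \<le> u \<Longrightarrow> u < 2*N \<Longrightarrow> u mod N = u - N"
    and "-N \<le> u \<Longrightarrow> u < 0 \<Longrightarrow> u mod N = u + N"
proof -
  show "0 \<le> u \<Longrightarrow> u < N \<Longrightarrow> u mod N = u" by simp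
  show "N \<le> u \<Longrightarrow> u < 2*N \<Longrightarrow> u mod N = u - N"
  proof -
    assume "N \<le> u" "u < 2*N"
    then have "(u - N) mod N = u - N" by (intro mod_pos_pos_trivial) linarith+
    moreover have "u mod N = (u - N + N) mod N" by simp
    ultimately show "u mod N = u - N" by (metis mod_add_self2)
  qed
  show "-N \<le> u \<Longrightarrow> u < 0 \<Longrightarrow> u mod N = u + N"
  proof -
    assume "-N \<le> u" "u < 0"
    then have "(u + N) mod N = u + N" by (intro mod_pos_pos_trivial) linarith+
    then show "u mod N = u + N" by simp
  qed
qed

locale P6 =
  fixes m \<alpha> \<beta> \<delta> :: nat and B :: "nat set set"
    and n k \<gamma> :: nat and D :: "nat set" and lab :: "int \<Rightarrow> nat"
  assumes m2: "m \<ge> 2"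
    and blocker: "is_SHP_blocker (2 * m - 1) B"
    and dirs: "bij_betw (edge_dir (2 * m - 1)) B
                 {(2 * i + 1) mod (2 * m - 1) | i. i < m}"
    and first: "\<alpha> < m" "{\<alpha>, \<alpha> + 1} \<in> B" "\<forall>i < \<alpha>. {i, i + 1} \<notin> B"
    and last: "\<delta> < m" "{m - \<delta> - 1, m - \<delta>} \<in> B"
              "\<forall>i. m - \<delta> \<le> i \<and> i < m \<longrightarrow> {i, i + 1} \<notin> B"
    and miss: "\<alpha> + \<beta> < m - \<delta>" "{\<alpha> + \<beta>, \<alpha> + \<beta> + 1} \<notin> B"
              "\<forall>i. \<alpha> \<le> i \<and> i < m - \<delta> \<and> i \<noteq> \<alpha> + \<beta> \<longrightarrow> {i, i + 1} \<in> B"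
    and neg: "\<not> (\<exists>\<nu>::nat. 1 \<le> \<nu> \<and> \<nu> < min \<beta> (m - \<delta> - \<alpha> - \<beta> - 1) \<and>
           {\<alpha> + \<beta> - \<nu>, \<alpha> + \<beta> + 1 + \<nu>} \<in> B)"
    and n_def: "n = 2*m-1" and k_def: "k = \<alpha>+\<beta>" and \<gamma>_def: "\<gamma> = m - \<delta> - \<alpha> - \<beta> - 1"
    and D_def: "D = {(2 * i + 1) mod (2 * m - 1) | i. i < m}"
    and lab_def: "\<And>x. lab x = nat (x mod int n)"
begin

lemma n3: "n \<ge> 3" "int n = 2*int m - 1" using m2 unfolding n_def by auto
lemma npos: "0 < int n" using n3 by simp
lemma \<beta>1: "\<beta> \<ge> 1" using first(2) miss(2) by (cases \<beta>) auto
lemma ne: "\<alpha> + \<beta> \<noteq> m - \<delta> - 1"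
proof
  assume h: "\<alpha> + \<beta> = m - \<delta> - 1"
  then have "\<alpha> + \<beta> + 1 = m - \<delta>" using miss(1) by simp
  then show False using h last(2) miss(2) by simp
qed
lemma k\<gamma>: "k + \<gamma> + 1 = m - \<delta>" "\<gamma> \<ge> 1" using miss(1) ne unfolding k_def \<gamma>_def by auto
lemma km: "k + 2 \<le> m" "k = \<alpha> + \<beta>" using k\<gamma> unfolding k_def by auto
lemma negB: "{k - \<nu>, k + 1 + \<nu>} \<notin> B" if "1 \<le> \<nu>" "\<nu> < \<beta>" "\<nu> < \<gamma>" for \<nu>
  using neg that unfolding k_def \<gamma>_def by auto
lemma dirB: "edge_dir n e \<in> D" if "e \<in> B" for e
  using bij_betwE[OF dirs] that unfolding D_def n_def by blast
lemma uniq: "e = e'" if "e \<in> B" "e' \<in> B" "edge_dir n e = edge_dir n e'" for e e'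
  using bij_betw_imp_inj_on[OF dirs] that unfolding n_def inj_on_def by blast
lemma notD: "d \<notin> D" if "even d" "2 \<le> d" "d \<le> 2*m-2" for d
proof
  assume "d \<in> D"
  then obtain i where i: "i < m" "d = (2 * i + 1) mod (2 * m - 1)" unfolding D_def by auto
  show False
  proof (cases "i < m - 1")
    case True
    then have "d = 2*i+1" using i by auto
    then show False using that by simp
  next
    case False
    then have "i = m - 1" using i by auto
    then have "2*i+1 = 2*m-1" using m2 by simp
  then have "d = 0" using i by simp
    then show False using that by simp
  qed
qed
lemma lab_lt: "lab x < n" for x unfolding lab_def using npos
  by (metis Euclidean_Rings.pos_mod_bound Euclidean_Rings.pos_mod_sign nat_less_iff)
lemma lab_int: "int (lab x) = x mod int n" for x unfolding lab_def using npos by simp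
lemma lab_id: "0 \<le> x \<Longrightarrow> x < int n \<Longrightarrow> lab x = nat x"
  unfolding lab_def by simp
lemma lab_hi: "int n \<le> x \<Longrightarrow> x < 2 * int n \<Longrightarrow> lab x = nat (x - int n)"
  unfolding lab_def using mod_cases(2)[OF npos] by simp
lemma lab_neg: "- int n \<le> x \<Longrightarrow> x < 0 \<Longrightarrow> lab x = nat (x + int n)"
  unfolding lab_def using mod_cases(3)[OF npos] by simp
lemma lab_succ: "lab (x+1) = (lab x + 1) mod n" for x
proof -
  have "int (lab (x+1)) = (x mod int n + 1) mod int n" unfolding lab_int by (rule mod_add_left_eq[symmetric])
  also have "\<dots> = int ((lab x + 1) mod n)" unfolding zmod_int by (simp add: lab_int add.commute)
  finally show ?thesis by simp
qed
lemma labsum: "(lab x + lab y) mod n = nat ((x + y) mod int n)" for x y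
proof -
  have "int ((lab x + lab y) mod n) = (x mod int n + y mod int n) mod int n" unfolding zmod_int by (simp add: lab_int)
  also have "\<dots> = (x + y) mod int n" by (simp add: mod_add_eq)
  finally show ?thesis by simp
qed
lemma dir2: "edge_dir n {p,q} = (p+q) mod n" if "p \<noteq> q" for p q
  using that unfolding edge_dir_def by simp
lemma bnd: "{w, (w+1) mod n} \<notin> B" if wa: "w < n" "w < \<alpha> \<or> m - \<delta> \<le> w" for w
proof
  assume inB: "{w, (w+1) mod n} \<in> B"
  consider "w < \<alpha>" | "m - \<delta> \<le> w" "w < m" | "m \<le> w" "w + 1 < n" | "w + 1 = n"
    using wa by (cases "w < \<alpha>"; cases "w < m"; cases "w+1 < n") auto
  then show False
  proof cases
    case 1
    then have "(w+1) mod n = w+1" using first(1) n3 unfolding n_def by auto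
    then show False using inB first(3) 1 by auto
  next
    case 2
    then have "(w+1) mod n = w+1" using n3 unfolding n_def by auto
    then show False using inB last(3) 2 by auto
  next
    case 3
    then have e: "(w+1) mod n = w+1" by auto
    have "edge_dir n {w, w+1} = (2*w+1) mod n" using dir2[of w "w+1"] by (simp add: mult_2)
    also have "\<dots> = 2*w+1 - n" using 3 n3 by (simp add: mod_if)
    finally have "edge_dir n {w, w+1} \<notin> D" using 3 n3 by (intro notD) (auto simp: n_def)
    then show False using dirB inB e by auto
  next
    case 4
    then have e: "(w+1) mod n = 0" by auto
    have "edge_dir n {w, 0} = w" using dir2[of w 0] 4 n3 by simp
    moreover have w2: "w = 2*(m-1)" using 4 m2 unfolding n_def by simp
    ultimately have "edge_dir n {w, 0} \<notin> D" using m2 by (intro notD) auto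
    then show False using dirB inB e by auto
  qed
qed
lemma bndI: "{lab u, lab (u+1)} \<notin> B" if "lab u < \<alpha> \<or> m - \<delta> \<le> lab u" for u
  using bnd[OF lab_lt that] unfolding lab_succ .
lemma chE: "{lab x, lab y} \<notin> B" if "lab x \<noteq> lab y" "x + y = 2*s" "1 \<le> s" "s \<le> int m - 1" for x y s
proof
  assume inB: "{lab x, lab y} \<in> B"
  have "edge_dir n {lab x, lab y} = nat ((x+y) mod int n)" using dir2[OF that(1)] labsum by simp
  also have "\<dots> = nat (2*s)" using that n3 by simp
  finally have "edge_dir n {lab x, lab y} \<notin> D" using that by (intro notD) (auto simp: nat_mult_distrib)
  then show False using dirB inB by auto
qed
lemma chO: "{lab x, lab y} \<notin> B" if "lab x \<noteq> lab y" "x + y = 2*int i + 1" "\<alpha> \<le> i" "i < m - \<delta>" "i \<noteq> k"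
  "{lab x, lab y} \<noteq> {i, i+1}" for x y i
proof
  assume inB: "{lab x, lab y} \<in> B"
  have iB: "{i, i+1} \<in> B" using miss(3) that(3,4,5) unfolding k_def by auto
  have "edge_dir n {lab x, lab y} = nat ((2*int i+1) mod int n)" using dir2[OF that(1)] labsum that(2) by simp
  also have "\<dots> = (2*i+1) mod n" by (simp add: nat_mod_as_int ac_simps)
  also have "\<dots> = edge_dir n {i, i+1}" using dir2[of i "i+1"] by (simp add: mult_2)
  finally show False using uniq[OF inB iB] that(6) by simp
qed
lemma blk: "blocks_SHP n B" using blocker unfolding is_SHP_blocker_def n_def by simp

lemma caseA: assumes True: "\<beta> \<le> \<gamma>" shows False
proof -
  define g where "g = gA (int k) (int \<beta>) (int \<gamma>)"
  have gr: "growth g (loA (int k) (int \<beta>) (int \<gamma>)) (hiA (int k) (int \<beta>) (int \<gamma>))"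
    unfolding g_def using growthA True by simp
  have n0: "0 < n" using n3 by simp
  have "is_SHP n {{nat (g i mod int n), nat (g (i+1) mod int n)} | i. i+1 < n}"
    by (rule growth.SHP[OF gr n0])
  then have "is_SHP n {{lab (g i), lab (g (i+1))} | i. i+1 < n}"
    by (simp only: lab_def)
  then obtain i where i: "i + 1 < n" "{lab (g i), lab (g (i+1))} \<in> B"
    using blk unfolding blocks_SHP_def by blast
  have li: "lab (g i) \<noteq> lab (g (i+1))"
  proof
    assume "lab (g i) = lab (g (i+1))"
    then have "nat (g i mod int n) = nat (g (i+1) mod int n)" by (simp only: lab_def)
    then show False using growth.lab_inj[OF gr, of n i "i+1"] i(1) by simp
  qed
  obtain t where t: "i = 2*t \<or> i = 2*t+1" by (metis oddE evenE)
  consider (a) "i = 0" | (b) "i = 2*t+1" "t+1 \<le> \<beta>" | (c) "i = 2*t" "1 \<le> t" "t < \<beta>"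
    | (d) "i = 2*\<beta>" | (e1) "i = 2*t+1" "\<beta> \<le> t" "t \<le> \<gamma>" | (e2) "i = 2*t" "\<beta>+1 \<le> t" "t \<le> \<gamma>"
    | (f) "i \<ge> 2*\<gamma>+2" using t by linarith
  then show False
  proof cases
    case a
    have "g i = int k" "g (i+1) = int k + 1" using a \<beta>1 by (simp_all add: g_def gA_def)
    then have "lab (g i) = k" "lab (g (i+1)) = k+1" using km n3 by (simp_all add: lab_id)
    then show False using i(2) miss(2) unfolding k_def by simp
  next
    case b
    have "g i = int k + int t + 1" "g (i+1) = int k - int t - 1" using b by (auto simp: g_def gA_def)
    then show False using chE[OF li, of "int k"] i(2) km \<beta>1 by simp
  next
    case c
    have "g i = int k - int t" "g (i+1) = int k + int t + 1" using c by (auto simp: g_def gA_def)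
    moreover have "lab (int k - int t) = k - t" using km c n3 by (simp add: lab_id)
    moreover have "lab (int k + int t + 1) = k + 1 + t" using km n3 c k\<gamma> True by (simp add: lab_id)
    ultimately show False using negB[of t] c True i(2) by simp
  next
    case d
    have "g i = int \<alpha>" "g (i+1) = int \<alpha> - 1" using d True km by (auto simp: g_def gA_def)
    then have e: "{lab (g i), lab (g (i+1))} = {lab (int \<alpha> - 1), lab (int \<alpha> - 1 + 1)}" by auto
    have "lab (int \<alpha> - 1) < \<alpha> \<or> m - \<delta> \<le> lab (int \<alpha> - 1)"
    proof (cases "\<alpha> = 0")
      case True
      then have "lab (int \<alpha> - 1) = n - 1" using n3 lab_neg[of "-1"] by simp
      moreover have "m - \<delta> \<le> n - 1" using m2 unfolding n_def by simp
      ultimately show ?thesis by simp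
    next
      case False
      then have "lab (int \<alpha> - 1) = \<alpha> - 1" using first(1) n3 by (simp add: lab_id)
      then show ?thesis using False by simp
    qed
    then have "{lab (int \<alpha> - 1), lab (int \<alpha> - 1 + 1)} \<notin> B" by (rule bndI)
    then show False using e i(2) by metis
  next
    case e1
    have "g i = int k - int t - 1" "g (i+1) = int k + int t + 1" using e1 by (auto simp: g_def gA_def)
    then show False using chE[OF li, of "int k"] i(2) km \<beta>1 by simp
  next
    case e2
    have gi: "g i = int k + int t" "g (i+1) = int k - int t - 1" using e2 \<beta>1 by (auto simp: g_def gA_def)
    have "lab (g i) = k + t" using gi km k\<gamma> e2 n3 by (simp add: lab_id)
    then have ne: "{lab (g i), lab (g (i+1))} \<noteq> {k-1, k-1+1}" using e2 \<beta>1 km by (auto simp: doubleton_eq_iff)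
    have s: "g i + g (i+1) = 2 * int (k-1) + 1" using gi km \<beta>1 by simp
    have "\<alpha> \<le> k - 1" "k - 1 < m - \<delta>" "k - 1 \<noteq> k" using km k\<gamma> \<beta>1 by auto
    then show False using chO[OF li s _ _ _ ne] i(2) by simp
  next
    case f
    define u where "u = int k + int i - int \<gamma> - 1"
    have g1: "g i = u" using f True unfolding u_def by (auto simp: g_def gA_def; presburger)
    have g2: "g (i+1) = u + 1" using f True unfolding u_def by (auto simp: g_def gA_def; presburger)
    note gi = g1 g2
    have "lab u < \<alpha> \<or> m - \<delta> \<le> lab u"
    proof (cases "u < int n")
      case lt: True
      have u0: "int (m - \<delta>) \<le> u" using f k\<gamma> unfolding u_def by linarith
      then have "0 \<le> u" by linarith
      then have "lab u = nat u" using lt by (simp add: lab_id)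
      moreover have "m - \<delta> \<le> nat u" using u0 \<open>0 \<le> u\<close> by (simp add: le_nat_iff)
      ultimately show ?thesis by simp
    next
      case ge: False
      have "u < 2 * int n" using i(1) km n3 unfolding u_def by linarith
      then have l: "lab u = nat (u - int n)" using ge by (simp add: lab_hi)
      have "u - int n < int \<alpha>" using i(1) True km k\<gamma> n3 unfolding u_def by linarith
      then have "nat (u - int n) < \<alpha>" using ge by (simp add: nat_less_iff)
      then show ?thesis using l by simp
    qed
    then show False using bndI gi i(2) by simp
  qed
qed

lemma caseB: assumes False: "\<not> \<beta> \<le> \<gamma>" shows False
proof -
  define g0 where "g0 = gA (int k) (int \<gamma>) (int \<beta>)"
  define g where "g i = 2 * int k + 1 - g0 i" for i
  have gr0: "growth g0 (loA (int k) (int \<gamma>) (int \<beta>)) (hiA (int k) (int \<gamma>) (int \<beta>))"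
    unfolding g0_def using growthA False by simp
  have gr: "growth g (\<lambda>i. 2 * int k + 1 - hiA (int k) (int \<gamma>) (int \<beta>) i) (\<lambda>i. 2 * int k + 1 - loA (int k) (int \<gamma>) (int \<beta>) i)"
    unfolding g_def[abs_def] by (rule growth_mirror[OF gr0])
  have n0: "0 < n" using n3 by simp
  have "is_SHP n {{nat (g i mod int n), nat (g (i+1) mod int n)} | i. i+1 < n}"
    by (rule growth.SHP[OF gr n0])
  then have "is_SHP n {{lab (g i), lab (g (i+1))} | i. i+1 < n}"
    by (simp only: lab_def)
  then obtain i where i: "i + 1 < n" "{lab (g i), lab (g (i+1))} \<in> B"
    using blk unfolding blocks_SHP_def by blast
  have li: "lab (g i) \<noteq> lab (g (i+1))"
  proof
    assume "lab (g i) = lab (g (i+1))"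
    then have "nat (g i mod int n) = nat (g (i+1) mod int n)" by (simp only: lab_def)
    then show False using growth.lab_inj[OF gr, of n i "i+1"] i(1) by simp
  qed
  obtain t where t: "i = 2*t \<or> i = 2*t+1" by (metis oddE evenE)
  consider (a) "i = 0" | (b) "i = 2*t+1" "t+1 \<le> \<gamma>" | (c) "i = 2*t" "1 \<le> t" "t < \<gamma>"
    | (d) "i = 2*\<gamma>" | (e1) "i = 2*t+1" "\<gamma> \<le> t" "t \<le> \<beta>" | (e2) "i = 2*t" "\<gamma>+1 \<le> t" "t \<le> \<beta>"
    | (f) "i \<ge> 2*\<beta>+2" using t by linarith
  then show False
  proof cases
    case a
    have "g i = int k + 1" "g (i+1) = int k" using a k\<gamma> by (simp_all add: g_def g0_def gA_def)
    then have "lab (g i) = k+1" "lab (g (i+1)) = k" using km n3 by (simp_all add: lab_id)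
    then show False using i(2) miss(2) unfolding k_def by (simp add: insert_commute)
  next
    case b
    have "g i = int k - int t" "g (i+1) = int k + int t + 2" using b by (auto simp: g_def g0_def gA_def)
    then show False using chE[OF li, of "int k + 1"] i(2) km by simp
  next
    case c
    have "g i = int k + int t + 1" "g (i+1) = int k - int t" using c by (auto simp: g_def g0_def gA_def)
    moreover have "t \<le> k" using km c False by simp
    moreover have "lab (int k - int t) = k - t" using km c k\<gamma> n3 \<open>t \<le> k\<close> by (simp add: lab_id)
    moreover have "lab (int k + int t + 1) = k + 1 + t" using km n3 c k\<gamma> by (simp add: lab_id)
    ultimately show False using negB[of t] c False i(2) by (simp add: insert_commute)
  next
    case d
    have gi: "g i = int (m - \<delta>)" "g (i+1) = int (m - \<delta>) + 1" using d False km k\<gamma> by (auto simp: g_def g0_def gA_def)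
    have "lab (int (m - \<delta>)) = m - \<delta>" using n3 km k\<gamma> by (simp add: lab_id)
    then show False using bndI[of "int (m - \<delta>)"] gi i(2) by simp
  next
    case e1
    have "g i = int k + int t + 2" "g (i+1) = int k - int t" using e1 by (auto simp: g_def g0_def gA_def)
    then show False using chE[OF li, of "int k + 1"] i(2) km by simp
  next
    case e2
    have gi: "g i = int k + 1 - int t" "g (i+1) = int k + int t + 2" using e2 k\<gamma> by (auto simp: g_def g0_def gA_def)
    have "lab (g i) = k + 1 - t" using gi km k\<gamma> e2 n3 by (simp add: lab_id)
    moreover have "k + 1 - t \<noteq> k + 1" "k + 1 - t \<noteq> k + 1 + 1" using e2 k\<gamma> by simp_all
    ultimately have ne: "{lab (g i), lab (g (i+1))} \<noteq> {k+1, k+1+1}" by (metis insertI1 insert_iff singletonD)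
    have s: "g i + g (i+1) = 2 * int (k+1) + 1" using gi by simp
    have "\<alpha> \<le> k + 1" "k + 1 < m - \<delta>" "k + 1 \<noteq> k" using km k\<gamma> by auto
    then show False using chO[OF li s _ _ _ ne] i(2) by simp
  next
    case f
    define u where "u = int k + int \<beta> + 1 - int i"
    have g0i: "g0 j = int k + int j - int \<beta> - 1" if "j \<ge> 2*\<beta>+2" for j
    proof (cases "j = 2*\<beta>+2")
      case True then show ?thesis using False by (simp add: g0_def gA_def)
    next
      case F2: False then show ?thesis using that False by (simp add: g0_def gA_def)
    qed
    have g1: "g i = u + 1" using g0i[of i] f unfolding u_def g_def by simp
    have g2: "g (i+1) = u" using g0i[of "i+1"] f unfolding u_def g_def by simp
    note gi = g1 g2
    have "lab u < \<alpha> \<or> m - \<delta> \<le> lab u"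
    proof (cases "0 \<le> u")
      case True
      have "u < int \<alpha>" using f km unfolding u_def by linarith
      moreover have "u < int n" using \<open>u < int \<alpha>\<close> first(1) n3 by linarith
      ultimately show ?thesis using True by (simp add: lab_id nat_less_iff)
    next
      case nn: False
      have "- int n \<le> u" using i(1) km n3 unfolding u_def by linarith
      then have l: "lab u = nat (u + int n)" using nn by (simp add: lab_neg)
      have "int (m - \<delta>) \<le> u + int n" using i(1) False km k\<gamma> n3 unfolding u_def by linarith
      then have "m - \<delta> \<le> nat (u + int n)" using nn \<open>- int n \<le> u\<close> by (simp add: le_nat_iff)
      then show ?thesis using l by simp
    qed
    then show False using bndI gi i(2) by (simp add: insert_commute)
  qed
qed

end

theorem proposition6:
  fixes m \<alpha> \<beta> \<delta> :: nat and B :: "nat set set"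
  assumes m2: "m \<ge> 2"
    and blocker: "is_SHP_blocker (2 * m - 1) B"
    and card_B: "card B = m"
    and dirs: "bij_betw (edge_dir (2 * m - 1)) B
                 {(2 * i + 1) mod (2 * m - 1) | i. i < m}"
    and first: "\<alpha> < m" "{\<alpha>, \<alpha> + 1} \<in> B" "\<forall>i < \<alpha>. {i, i + 1} \<notin> B"
    and last: "\<delta> < m" "{m - \<delta> - 1, m - \<delta>} \<in> B"
              "\<forall>i. m - \<delta> \<le> i \<and> i < m \<longrightarrow> {i, i + 1} \<notin> B"
    and order: "\<alpha> \<le> m - \<delta> - 1"
    and miss: "\<alpha> + \<beta> < m - \<delta>" "{\<alpha> + \<beta>, \<alpha> + \<beta> + 1} \<notin> B"
              "\<forall>i. \<alpha> \<le> i \<and> i < m - \<delta> \<and> i \<noteq> \<alpha> + \<beta> \<longrightarrow> {i, i + 1} \<in> B"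
  shows "\<exists>\<nu>::nat. 1 \<le> \<nu> \<and> \<nu> < min \<beta> (m - \<delta> - \<alpha> - \<beta> - 1) \<and>
           {\<alpha> + \<beta> - \<nu>, \<alpha> + \<beta> + 1 + \<nu>} \<in> B"
proof (rule ccontr)
  assume neg: "\<not> ?thesis"
  interpret P6 m \<alpha> \<beta> \<delta> B "2*m-1" "\<alpha>+\<beta>" "m - \<delta> - \<alpha> - \<beta> - 1"
    "{(2 * i + 1) mod (2 * m - 1) | i. i < m}" "\<lambda>x. nat (x mod int (2*m-1))"
    using assms neg by unfold_locales (assumption | rule refl)+
  show False using caseA caseB by blast
qed

end
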